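(* Let $U_1,U_2,\dots$ be i.i.d. almost surely positive random variables distributed as $U$ with tail function $Q(x)=\mathbb{P}(U>x)$, and assume $\mathbb{E}[U^2]<\infty$ and that there exist $\beta\in(0,1/2)$ and $x_0>0$ in the interior of the support of $U$ such that $Q^{1/2-\beta}$ is convex on $[x_0,\infty)$. Let $V_1\le\dots\le V_N$ be the order statistics of $(U_1,\dots,U_N)$ and let $Q^{-1}(y)=\inf\{x>0:\ Q(x)\le y\}$ for $y\in(0,1)$. For any function $h$ on $\mathbb{R}_+$ with $\lim_{x\to+\infty}h(x)=+\infty$, set \[a^h_N=\begin{cases}Q^{-1}\big(\tfrac{h(N)}{N}\big)&\text{if }\tfrac{h(N)}N<1,\\ 0&\text{otherwise,}\end{cases}\qquad b^h_N=Q^{-1}\Big(\frac1{Nh(N)}\Big),\qquad A^h_N=\{a^h_N\le V_{N-1}\le V_N\le b^h_N\}.\] Then $\lim_{N\to\infty}\mathbb{P}(A^h_N)=1$. *)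

theory Defs
  imports "HOL-Probability.Probability"
begin

definition tail :: "'a measure \<Rightarrow> ('a \<Rightarrow> real) \<Rightarrow> real \<Rightarrow> real" where
  "tail M X x = measure M {\<omega> \<in> space M. X \<omega> > x}"

definition tail_inv :: "(real \<Rightarrow> real) \<Rightarrow> real \<Rightarrow> real" where
  "tail_inv Q y = Inf {x. x > 0 \<and> Q x \<le> y}"

definition rv_support :: "'a measure \<Rightarrow> ('a \<Rightarrow> real) \<Rightarrow> real set" where
  "rv_support M X = {x. \<forall>e>0. measure M {\<omega> \<in> space M. \<bar>X \<omega> - x\<bar> < e} > 0}"

(* k-th order statistic (1-based, increasing) of U 0, ..., U (N-1) *)
definition order_stat :: "(nat \<Rightarrow> 'a \<Rightarrow> real) \<Rightarrow> nat \<Rightarrow> nat \<Rightarrow> 'a \<Rightarrow> real" where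
  "order_stat U N k \<omega> = sort (map (\<lambda>i. U i \<omega>) [0..<N]) ! (k - 1)"

end

theory Submission
  imports Defs
begin


context prob_space begin

lemma tail_mono:
  assumes X: "X \<in> borel_measurable M" and "x \<le> y"
  shows "tail M X y \<le> tail M X x"
  unfolding tail_def using assms by (intro finite_measure_mono) auto

lemma tail_right:
  assumes X: "X \<in> borel_measurable M" and le: "\<And>x. x > b \<Longrightarrow> tail M X x \<le> y"
  shows "tail M X b \<le> y"
proof -
  define A where "A n = {\<omega> \<in> space M. X \<omega> > b + 1 / real (Suc n)}" for n
  have "(\<lambda>n. measure M (A n)) \<longlonglongrightarrow> measure M (\<Union>n. A n)"
  proof (rule finite_Lim_measure_incseq)
    show "range A \<subseteq> sets M" using X unfolding A_def by auto
    show "incseq A" unfolding incseq_def A_def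
    proof (intro allI impI subsetI)
      fix m n \<omega> assume "m \<le> n" "\<omega> \<in> {\<omega> \<in> space M. b + 1 / real (Suc m) < X \<omega>}"
      moreover have "1 / real (Suc n) \<le> 1 / real (Suc m)" using \<open>m \<le> n\<close> by (simp add: frac_le)
      ultimately show "\<omega> \<in> {\<omega> \<in> space M. b + 1 / real (Suc n) < X \<omega>}" by auto
    qed
  qed
  moreover have "(\<Union>n. A n) = {\<omega> \<in> space M. X \<omega> > b}"
  proof (intro set_eqI iffI)
    fix \<omega> assume "\<omega> \<in> {\<omega> \<in> space M. X \<omega> > b}"
    then have "X \<omega> - b > 0" "\<omega> \<in> space M" by auto
    then obtain n where "1 / real (Suc n) < X \<omega> - b"
      by (meson nat_approx_posE)
    then have "b + 1 / real (Suc n) < X \<omega>" by simp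
    then show "\<omega> \<in> (\<Union>n. A n)" using \<open>\<omega> \<in> space M\<close> unfolding A_def by blast
  next
    fix \<omega> assume "\<omega> \<in> (\<Union>n. A n)"
    then obtain n where "\<omega> \<in> A n" by auto
    then have 1: "b + 1 / real (Suc n) < X \<omega>" "\<omega> \<in> space M" unfolding A_def by auto
    moreover have "0 < 1 / real (Suc n)" by simp
    ultimately have "b < X \<omega>" by linarith
    then show "\<omega> \<in> {\<omega> \<in> space M. X \<omega> > b}" using 1 by auto
  qed
  ultimately have lim: "(\<lambda>n. measure M (A n)) \<longlonglongrightarrow> tail M X b" unfolding tail_def by simp
  have "\<forall>n. measure M (A n) \<le> y" unfolding A_def using le[unfolded tail_def] by simp
  then show ?thesis using lim by (intro LIMSEQ_le_const2) auto
qed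

lemma tail_left:
  assumes X: "X \<in> borel_measurable M" and ge: "\<And>x. x < a \<Longrightarrow> tail M X x \<ge> y"
  shows "prob {\<omega> \<in> space M. X \<omega> \<ge> a} \<ge> y"
proof -
  define A where "A n = {\<omega> \<in> space M. X \<omega> > a - 1 / real (Suc n)}" for n
  have "(\<lambda>n. measure M (A n)) \<longlonglongrightarrow> measure M (\<Inter>n. A n)"
  proof (rule finite_Lim_measure_decseq)
    show "range A \<subseteq> sets M" using X unfolding A_def by auto
    show "decseq A" unfolding decseq_def A_def
    proof (intro allI impI subsetI)
      fix m n \<omega> assume "m \<le> n" "\<omega> \<in> {\<omega> \<in> space M. a - 1 / real (Suc n) < X \<omega>}"
      moreover have "1 / real (Suc n) \<le> 1 / real (Suc m)" using \<open>m \<le> n\<close> by (simp add: frac_le)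
      ultimately show "\<omega> \<in> {\<omega> \<in> space M. a - 1 / real (Suc m) < X \<omega>}" by auto
    qed
  qed
  moreover have "(\<Inter>n. A n) = {\<omega> \<in> space M. X \<omega> \<ge> a}"
  proof (intro set_eqI iffI)
    fix \<omega> assume "\<omega> \<in> (\<Inter>n. A n)"
    then have *: "\<And>n. a - 1 / real (Suc n) < X \<omega>" and "\<omega> \<in> space M" unfolding A_def by auto
    have "a \<le> X \<omega>"
    proof (rule ccontr)
      assume "\<not> a \<le> X \<omega>"
      then have "a - X \<omega> > 0" by simp
      then obtain n where "1 / real (Suc n) < a - X \<omega>" by (meson nat_approx_posE)
      with *[of n] show False by simp
    qed
    then show "\<omega> \<in> {\<omega> \<in> space M. X \<omega> \<ge> a}" using \<open>\<omega> \<in> space M\<close> by auto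
  next
    fix \<omega> assume w: "\<omega> \<in> {\<omega> \<in> space M. X \<omega> \<ge> a}"
    { fix n :: nat have "0 < 1 / real (Suc n)" by simp
      moreover have "a \<le> X \<omega>" using w by simp
      ultimately have "a - 1 / real (Suc n) < X \<omega>" by linarith }
    then show "\<omega> \<in> (\<Inter>n. A n)" using w unfolding A_def by blast
  qed
  ultimately have lim: "(\<lambda>n. measure M (A n)) \<longlonglongrightarrow> prob {\<omega> \<in> space M. X \<omega> \<ge> a}" by simp
  have "\<And>n. a - 1 / real (Suc n) < a" by simp
  then have "\<forall>n. measure M (A n) \<ge> y" unfolding A_def using ge[unfolded tail_def] by blast
  then show ?thesis using lim by (intro LIMSEQ_le_const) auto
qed

lemma tail_to_0:
  assumes X: "X \<in> borel_measurable M" and y: "y > 0"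
  shows "\<exists>x>0. tail M X x \<le> y"
proof -
  define A where "A n = {\<omega> \<in> space M. X \<omega> > real (Suc n)}" for n
  have "(\<lambda>n. measure M (A n)) \<longlonglongrightarrow> measure M (\<Inter>n. A n)"
  proof (rule finite_Lim_measure_decseq)
    show "range A \<subseteq> sets M" using X unfolding A_def by auto
    show "decseq A" unfolding decseq_def A_def by auto
  qed
  moreover have "(\<Inter>n. A n) = {}"
  proof -
    { fix \<omega> assume "\<omega> \<in> (\<Inter>n. A n)"
      then have "\<And>n. X \<omega> > real (Suc n)" unfolding A_def by auto
      moreover obtain n where "X \<omega> < real n" using reals_Archimedean2 by blast
      ultimately have False using \<open>X \<omega> > real (Suc n)\<close> by simp }
    then show ?thesis by auto
  qed
  ultimately have "(\<lambda>n. measure M (A n)) \<longlonglongrightarrow> 0" by simp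
  from order_tendstoD(2)[OF this y] obtain n where "measure M (A n) < y"
    by (auto simp: eventually_sequentially)
  then show ?thesis unfolding A_def tail_def by (intro exI[of _ "real (Suc n)"]) auto
qed

lemma tail_inv_upper:
  assumes X: "X \<in> borel_measurable M" and y: "y > 0"
  shows "tail M X (tail_inv (tail M X) y) \<le> y"
proof (rule tail_right[OF X])
  let ?S = "{x. x > 0 \<and> tail M X x \<le> y}"
  fix x assume "x > tail_inv (tail M X) y"
  then have lt: "Inf ?S < x" unfolding tail_inv_def .
  have ne: "?S \<noteq> {}"
  proof -
    obtain z where z: "z > 0" "tail M X z \<le> y" using tail_to_0[OF X y] by blast
    then have "z \<in> ?S" by simp
    then show ?thesis by blast
  qed
  from cInf_lessD[OF ne lt] obtain s where s: "s \<in> ?S" "s < x" by blast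
  have "tail M X x \<le> tail M X s" using s(2) by (intro tail_mono[OF X]) simp
  moreover have "tail M X s \<le> y" using s(1) by simp
  ultimately show "tail M X x \<le> y" by linarith
qed

lemma tail_inv_lower:
  assumes X: "X \<in> borel_measurable M" and y: "y > 0" "y \<le> 1"
    and pos: "AE \<omega> in M. X \<omega> > 0" and "x < tail_inv (tail M X) y"
  shows "tail M X x \<ge> y"
proof (cases "x > 0")
  case True
  let ?S = "{x. x > 0 \<and> tail M X x \<le> y}"
  have "bdd_below ?S" by (intro bdd_belowI[of _ 0]) auto
  have "x \<notin> ?S"
  proof
    assume "x \<in> ?S"
    then have "Inf ?S \<le> x" using \<open>bdd_below ?S\<close> by (rule cInf_lower)
    then show False using assms(5) unfolding tail_inv_def by simp
  qed
  then show ?thesis using True by auto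
next
  case False
  have "tail M X 0 = 1" unfolding tail_def using pos X
    by (subst prob_Collect_eq_1) auto
  then show ?thesis using tail_mono[OF X, of x 0] False y by auto
qed

end


lemma sort_last_le:
  fixes xs :: "real list"
  assumes "length xs = N" "N \<ge> 1"
  shows "sort xs ! (N - 1) \<le> b \<longleftrightarrow> (\<forall>x\<in>set xs. x \<le> b)"
proof
  assume le: "sort xs ! (N - 1) \<le> b"
  show "\<forall>x\<in>set xs. x \<le> b"
  proof
    fix x assume "x \<in> set xs"
    then have "x \<in> set (sort xs)" by simp
    then obtain k where k: "k < length (sort xs)" "sort xs ! k = x" by (metis in_set_conv_nth)
    then have k: "k < N" "sort xs ! k = x" using assms by auto
    have "sort xs ! k \<le> sort xs ! (N - 1)"
      using k assms by (intro sorted_nth_mono) auto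
    then show "x \<le> b" using k le by simp
  qed
next
  assume "\<forall>x\<in>set xs. x \<le> b"
  moreover have "sort xs ! (N - 1) \<in> set xs" using assms
    by (metis diff_less length_sort less_numeral_extra(1) nth_mem order_less_le_trans set_sort)
  ultimately show "sort xs ! (N - 1) \<le> b" by blast
qed

lemma sort_2nd_ge:
  fixes xs :: "real list"
  assumes len: "length xs = N" "N \<ge> 2"
  shows "a \<le> sort xs ! (N - 2) \<longleftrightarrow> 2 \<le> length (filter (\<lambda>v. a \<le> v) xs)"
proof -
  let ?s = "sort xs"
  have "length (filter (\<lambda>v. a \<le> v) xs) = length (filter (\<lambda>v. a \<le> v) ?s)"
    by (metis mset_filter mset_sort size_mset)
  also have "\<dots> = card {k. k < N \<and> a \<le> ?s ! k}"
    using len by (simp add: length_filter_conv_card)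
  finally have eq: "length (filter (\<lambda>v. a \<le> v) xs) = card {k. k < N \<and> a \<le> ?s ! k}" .
  have fin: "finite {k. k < N \<and> a \<le> ?s ! k}" by simp
  show ?thesis
  proof
    assume a: "a \<le> ?s ! (N - 2)"
    have "?s ! (N - 2) \<le> ?s ! (N - 1)" using len by (intro sorted_nth_mono) auto
    then have "{N - 2, N - 1} \<subseteq> {k. k < N \<and> a \<le> ?s ! k}" using a len by auto
    from card_mono[OF fin this] have "card {N - 2, N - 1} \<le> card {k. k < N \<and> a \<le> ?s ! k}" .
    moreover have "card {N - 2, N - 1} = 2" using len by simp
    ultimately show "2 \<le> length (filter (\<lambda>v. a \<le> v) xs)" using eq by simp
  next
    assume c: "2 \<le> length (filter (\<lambda>v. a \<le> v) xs)"
    show "a \<le> ?s ! (N - 2)"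
    proof (rule ccontr)
      assume "\<not> a \<le> ?s ! (N - 2)"
      then have lt: "?s ! (N - 2) < a" by simp
      have "{k. k < N \<and> a \<le> ?s ! k} \<subseteq> {N - 1}"
      proof
        fix k assume k: "k \<in> {k. k < N \<and> a \<le> ?s ! k}"
        have "\<not> k \<le> N - 2"
        proof
          assume "k \<le> N - 2"
          then have "?s ! k \<le> ?s ! (N - 2)" using len by (intro sorted_nth_mono) auto
          then show False using k lt by auto
        qed
        then show "k \<in> {N - 1}" using k by auto
      qed
      from card_mono[OF _ this] have "card {k. k < N \<and> a \<le> ?s ! k} \<le> 1" by simp
      then show False using c eq by simp
    qed
  qed
qed

lemma order_stat_max:
  assumes "N \<ge> 1"
  shows "order_stat U N N \<omega> \<le> b \<longleftrightarrow> (\<forall>i<N. U i \<omega> \<le> b)"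
  unfolding order_stat_def using sort_last_le[of "map (\<lambda>i. U i \<omega>) [0..<N]" N b] assms by auto

lemma order_stat_2nd:
  assumes "N \<ge> 2"
  shows "a \<le> order_stat U N (N - 1) \<omega> \<longleftrightarrow> 2 \<le> card {i\<in>{..<N}. a \<le> U i \<omega>}"
proof -
  have "{i. i < N \<and> a \<le> map (\<lambda>i. U i \<omega>) [0..<N] ! i} = {i\<in>{..<N}. a \<le> U i \<omega>}" by auto
  then have "length (filter (\<lambda>v. a \<le> v) (map (\<lambda>i. U i \<omega>) [0..<N])) = card {i\<in>{..<N}. a \<le> U i \<omega>}"
    by (simp add: length_filter_conv_card)
  moreover have "N - 1 - 1 = N - 2" by simp
  ultimately show ?thesis unfolding order_stat_def
    using sort_2nd_ge[of "map (\<lambda>i. U i \<omega>) [0..<N]" N a] assms by simp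
qed

lemma order_stat_mid:
  assumes "N \<ge> 2"
  shows "order_stat U N (N - 1) \<omega> \<le> order_stat U N N \<omega>"
  unfolding order_stat_def using assms by (intro sorted_nth_mono) auto



lemma analytic_bound:
  fixes q m :: real and N :: nat
  assumes q: "0 \<le> q" "q \<le> 1" and N: "N \<ge> 1" and m: "real N * q \<ge> m"
  shows "(1 - q) ^ N + real N * q * (1 - q) ^ (N - 1) \<le> 2 * exp 1 * exp (- m / 2)"
proof -
  let ?x = "real N * q"
  have x0: "?x \<ge> 0" using q by simp
  have "(1 - q) ^ N \<le> (1 - q) ^ (N - 1)" using q by (intro power_decreasing) auto
  then have "(1 - q) ^ N + ?x * (1 - q) ^ (N - 1) \<le> (1 + ?x) * (1 - q) ^ (N - 1)"
    by (simp add: algebra_simps)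
  also have "(1 - q) ^ (N - 1) \<le> exp (- q) ^ (N - 1)"
    using q by (intro power_mono) (auto simp: exp_ge_add_one_self[of "-q", simplified] )
  also have "exp (- q) ^ (N - 1) = exp (q - ?x)"
    using N by (simp add: exp_of_nat_mult[symmetric] of_nat_diff algebra_simps)
  also have "exp (q - ?x) \<le> exp 1 * exp (- ?x)"
    using q by (simp add: exp_diff[symmetric] exp_add[symmetric])
  finally have 1: "(1 - q) ^ N + ?x * (1 - q) ^ (N - 1) \<le> (1 + ?x) * (exp 1 * exp (- ?x))"
    using x0 by (simp add: mult_left_mono)
  have "1 + ?x \<le> 2 * exp (?x / 2)" using exp_ge_add_one_self[of "?x/2"] by linarith
  then have "(1 + ?x) * (exp 1 * exp (- ?x)) \<le> 2 * exp (?x / 2) * (exp 1 * exp (- ?x))"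
    by (intro mult_right_mono) auto
  also have "\<dots> = 2 * exp 1 * exp (- ?x / 2)"
    by (simp add: exp_add[symmetric] mult_ac)
  also have "\<dots> \<le> 2 * exp 1 * exp (- m / 2)" using m by simp
  finally have 2: "(1 + ?x) * (exp 1 * exp (- ?x)) \<le> 2 * exp 1 * exp (- m / 2)" .
  show ?thesis using 1 2 by linarith
qed

context prob_space begin

lemma count_le1:
  fixes U :: "nat \<Rightarrow> 'a \<Rightarrow> real" and a :: real
  assumes indep: "indep_vars (\<lambda>_. borel) U UNIV"
   and ident: "\<And>i. distr M borel (U i) = distr M borel (U 0)"
   and N: "N \<ge> 1"
  shows "{\<omega>\<in>space M. card {i\<in>{..<N}. a \<le> U i \<omega>} \<le> 1} \<in> sets M"
    "prob {\<omega>\<in>space M. card {i\<in>{..<N}. a \<le> U i \<omega>} \<le> 1}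
      \<le> (1 - prob {\<omega>\<in>space M. a \<le> U 0 \<omega>}) ^ N
         + real N * prob {\<omega>\<in>space M. a \<le> U 0 \<omega>} * (1 - prob {\<omega>\<in>space M. a \<le> U 0 \<omega>}) ^ (N - 1)"
proof -
  define q where "q = prob {\<omega>\<in>space M. a \<le> U 0 \<omega>}"
  have meas: "\<And>i. U i \<in> borel_measurable M" using indep unfolding indep_vars_def by auto
  have pr: "prob (U i -` B \<inter> space M) = prob (U 0 -` B \<inter> space M)" if "B \<in> sets borel" for i B
    using measure_distr[OF meas[of i] that] measure_distr[OF meas[of 0] that] ident[of i] by simp
  have q_eq: "prob (U 0 -` {a..} \<inter> space M) = q" unfolding q_def
    by (rule arg_cong[where f=prob]) auto
  have "prob (U 0 -` {..<a} \<inter> space M) = prob (space M - (U 0 -` {a..} \<inter> space M))"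
    by (rule arg_cong[where f=prob]) auto
  also have "\<dots> = 1 - q" using q_eq meas[of 0] by (subst prob_compl) auto
  finally have q'_eq: "prob (U 0 -` {..<a} \<inter> space M) = 1 - q" .
  have lt: "prob (U i -` {..<a} \<inter> space M) = 1 - q" for i
    using pr[of "{..<a}" i] q'_eq by simp
  have ge: "prob (U i -` {a..} \<inter> space M) = q" for i
    using pr[of "{a..}" i] q_eq by simp
  define E where "E = (\<Inter>i\<in>{..<N}. U i -` {..<a} \<inter> space M)"
  define F where "F j = (\<Inter>i\<in>{..<N}. U i -` (if i = j then {a..} else {..<a}) \<inter> space M)" for j
  have "0 \<in> {..<N}" using N by simp
  then have NE: "{..<N} \<noteq> {}" by blast
  have Esets: "E \<in> sets M" unfolding E_def using meas NE by (intro sets.finite_INT) auto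
  have Fsets: "F j \<in> sets M" for j unfolding F_def using meas NE by (intro sets.finite_INT) auto
  have probE: "prob E = (1 - q) ^ N"
  proof -
    have "prob E = (\<Prod>i\<in>{..<N}. prob (U i -` {..<a} \<inter> space M))"
      unfolding E_def by (rule indep_varsD[OF indep NE finite_lessThan subset_UNIV]) simp
    also have "\<dots> = (\<Prod>i\<in>{..<N}. 1 - q)" using lt by (intro prod.cong) auto
    finally show ?thesis by simp
  qed
  have probF: "prob (F j) = q * (1 - q) ^ (N - 1)" if j: "j < N" for j
  proof -
    have "prob (F j) = (\<Prod>i\<in>{..<N}. prob (U i -` (if i = j then {a..} else {..<a}) \<inter> space M))"
      unfolding F_def by (rule indep_varsD[OF indep NE finite_lessThan subset_UNIV]) simp
    also have "\<dots> = (\<Prod>i\<in>{..<N}. (if i = j then q else 1 - q))"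
      using lt ge by (intro prod.cong) auto
    also have "\<dots> = (if j = j then q else 1 - q) * (\<Prod>i\<in>{..<N}-{j}. (if i = j then q else 1 - q))"
      using j by (intro prod.remove) auto
    also have "(\<Prod>i\<in>{..<N}-{j}. (if i = j then q else 1 - q)) = (\<Prod>i\<in>{..<N}-{j}. 1 - q)"
      by (intro prod.cong) auto
    finally show ?thesis using j by simp
  qed
  have eq: "{\<omega>\<in>space M. card {i\<in>{..<N}. a \<le> U i \<omega>} \<le> 1} = E \<union> (\<Union>j\<in>{..<N}. F j)"
  proof (intro set_eqI iffI)
    fix \<omega> assume w: "\<omega> \<in> {\<omega>\<in>space M. card {i\<in>{..<N}. a \<le> U i \<omega>} \<le> 1}"
    let ?C = "{i\<in>{..<N}. a \<le> U i \<omega>}"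
    have sp: "\<omega> \<in> space M" using w by blast
    have "card ?C \<le> 1" using w by blast
    then have "card ?C = 0 \<or> card ?C = 1" by linarith
    then show "\<omega> \<in> E \<union> (\<Union>j\<in>{..<N}. F j)"
    proof
      assume "card ?C = 0"
      moreover have "finite ?C" by simp
      ultimately have C0: "?C = {}" by (simp only: card_0_eq)
      have "\<omega> \<in> E" unfolding E_def
      proof (intro INT_I)
        fix i assume "i \<in> {..<N}"
        then have "\<not> a \<le> U i \<omega>" using C0 by blast
        then show "\<omega> \<in> U i -` {..<a} \<inter> space M" using sp by simp
      qed
      then show ?thesis by blast
    next
      assume "card ?C = 1"
      then obtain j where j: "?C = {j}" by (rule card_1_singletonE)
      then have jN: "j < N" by blast
      have jj: "a \<le> U i \<omega> \<longleftrightarrow> i = j" if "i < N" for i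
        using j that by blast
      have "\<omega> \<in> F j" unfolding F_def
      proof (intro INT_I)
        fix i assume i: "i \<in> {..<N}"
        show "\<omega> \<in> U i -` (if i = j then {a..} else {..<a}) \<inter> space M"
        proof (cases "i = j")
          case True
          then show ?thesis using jj[of i] i sp by simp
        next
          case False
          then show ?thesis using jj[of i] i sp by simp
        qed
      qed
      then show ?thesis using jN by blast
    qed
  next
    fix \<omega> assume w: "\<omega> \<in> E \<union> (\<Union>j\<in>{..<N}. F j)"
    have "\<omega> \<in> E \<or> (\<exists>j<N. \<omega> \<in> F j)" using w by blast
    then show "\<omega> \<in> {\<omega>\<in>space M. card {i\<in>{..<N}. a \<le> U i \<omega>} \<le> 1}"
    proof
      assume e: "\<omega> \<in> E"
      have sp: "\<omega> \<in> space M" using e NE unfolding E_def by blast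
      have "{i\<in>{..<N}. a \<le> U i \<omega>} = {}"
      proof (intro equals0I)
        fix i assume "i \<in> {i\<in>{..<N}. a \<le> U i \<omega>}"
        then have "i \<in> {..<N}" "a \<le> U i \<omega>" by auto
        moreover from this(1) e have "U i \<omega> < a" unfolding E_def by blast
        ultimately show False by simp
      qed
      then have c0: "card {i\<in>{..<N}. a \<le> U i \<omega>} = 0" by (simp only: card.empty)
      show ?thesis
      proof (intro CollectI conjI sp)
        show "card {i\<in>{..<N}. a \<le> U i \<omega>} \<le> 1" using c0 by linarith
      qed
    next
      assume "\<exists>j<N. \<omega> \<in> F j"
      then obtain j where j: "j < N" "\<omega> \<in> F j" by blast
      have jF: "\<omega> \<in> U j -` (if j = j then {a..} else {..<a}) \<inter> space M"
        using INT_D[OF j(2)[unfolded F_def], of j] j(1) by simp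
      then have sp: "\<omega> \<in> space M" by (rule IntD2)
      have "{i\<in>{..<N}. a \<le> U i \<omega>} \<subseteq> {j}"
      proof
        fix i assume "i \<in> {i\<in>{..<N}. a \<le> U i \<omega>}"
        then have i: "i \<in> {..<N}" "a \<le> U i \<omega>" by auto
        show "i \<in> {j}"
        proof (rule ccontr)
          assume "i \<notin> {j}"
          then have "i \<noteq> j" by simp
          moreover have "\<omega> \<in> U i -` (if i = j then {a..} else {..<a}) \<inter> space M"
            by (rule INT_D[OF j(2)[unfolded F_def] i(1)])
          ultimately have "U i \<omega> < a" by simp
          then show False using i(2) by simp
        qed
      qed
      from card_mono[OF _ this] have "card {i\<in>{..<N}. a \<le> U i \<omega>} \<le> 1" by simp
      then show ?thesis using sp by simp
    qed
  qed
  show "{\<omega>\<in>space M. card {i\<in>{..<N}. a \<le> U i \<omega>} \<le> 1} \<in> sets M"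
    unfolding eq using Esets Fsets by auto
  have "prob (E \<union> (\<Union>j\<in>{..<N}. F j)) \<le> prob E + prob (\<Union>j\<in>{..<N}. F j)"
    using Esets Fsets by (intro measure_Un_le) auto
  also have "prob (\<Union>j\<in>{..<N}. F j) \<le> (\<Sum>j\<in>{..<N}. prob (F j))"
    using Fsets by (intro finite_measure_subadditive_finite) auto
  also have "(\<Sum>j\<in>{..<N}. prob (F j)) = real N * q * (1 - q) ^ (N - 1)"
    using probF by simp
  finally show "prob {\<omega>\<in>space M. card {i\<in>{..<N}. a \<le> U i \<omega>} \<le> 1}
      \<le> (1 - prob {\<omega>\<in>space M. a \<le> U 0 \<omega>}) ^ N
         + real N * prob {\<omega>\<in>space M. a \<le> U 0 \<omega>} * (1 - prob {\<omega>\<in>space M. a \<le> U 0 \<omega>}) ^ (N - 1)"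
    unfolding eq probE q_def by simp
qed

end
theorem lemma2:
  fixes M :: "'a measure" and U :: "nat \<Rightarrow> 'a \<Rightarrow> real"
    and h :: "real \<Rightarrow> real" and \<beta> x0 :: real
  assumes "prob_space M"
    and indep: "prob_space.indep_vars M (\<lambda>_. borel) U UNIV"
    and ident: "\<And>i. distr M borel (U i) = distr M borel (U 0)"
    and pos: "AE \<omega> in M. U 0 \<omega> > 0"
    and sq: "integrable M (\<lambda>\<omega>. (U 0 \<omega>)^2)"
    and \<beta>: "0 < \<beta>" "\<beta> < 1/2"
    and x0: "x0 > 0" "x0 \<in> interior (rv_support M (U 0))"
    and cvx: "convex_on {x0..} (\<lambda>x. (tail M (U 0) x) powr (1/2 - \<beta>))"
    and h: "filterlim h at_top at_top"
  shows "(\<lambda>N. measure M {\<omega> \<in> space M.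
            (if h (real N) / real N < 1 then tail_inv (tail M (U 0)) (h (real N) / real N) else 0)
              \<le> order_stat U N (N - 1) \<omega>
            \<and> order_stat U N (N - 1) \<omega> \<le> order_stat U N N \<omega>
            \<and> order_stat U N N \<omega> \<le> tail_inv (tail M (U 0)) (1 / (real N * h (real N)))})
         \<longlonglongrightarrow> 1"
  proof -
  interpret prob_space M by fact
  have meas: "\<And>i. U i \<in> borel_measurable M" using indep unfolding indep_vars_def by auto
  have pr: "prob (U i -` B \<inter> space M) = prob (U 0 -` B \<inter> space M)" if "B \<in> sets borel" for i B
    using measure_distr[OF meas[of i] that] measure_distr[OF meas[of 0] that] ident[of i] by simp
  let ?Q = "tail M (U 0)"
  have Q0: "?Q 0 = 1" unfolding tail_def using pos meas[of 0]
    by (subst prob_Collect_eq_1) auto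
  define a where "a N = (if h (real N) / real N < 1 then tail_inv ?Q (h (real N) / real N) else 0)" for N :: nat
  define b where "b N = tail_inv ?Q (1 / (real N * h (real N)))" for N :: nat
  define m where "m N = min (h (real N)) (real N)" for N :: nat
  define G where "G N = {\<omega> \<in> space M. a N \<le> order_stat U N (N - 1) \<omega>
            \<and> order_stat U N (N - 1) \<omega> \<le> order_stat U N N \<omega>
            \<and> order_stat U N N \<omega> \<le> b N}" for N
  have hN: "filterlim (\<lambda>N. h (real N)) at_top sequentially"
    by (rule filterlim_compose[OF h filterlim_real_sequentially])
  have ev_h: "\<forall>\<^sub>F N in sequentially. Z < h (real N)" for Z
    using hN[unfolded filterlim_at_top_dense] by (rule spec)
  have lowbound: "1 - 2 * exp 1 * exp (- m N / 2) - 1 / h (real N) \<le> prob (G N)"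
    if N2: "N \<ge> 2" and hpos: "h (real N) > 0" for N
  proof -
    define q where "q = prob {\<omega>\<in>space M. a N \<le> U 0 \<omega>}"
    have Npos: "real N > 0" using N2 by simp
    have qmin: "q \<ge> min (h (real N) / real N) 1"
    proof (cases "h (real N) / real N < 1")
      case True
      have y: "h (real N) / real N > 0" using hpos Npos by simp
      have "q \<ge> h (real N) / real N" unfolding q_def
      proof (rule tail_left[OF meas[of 0]])
        fix x assume "x < a N"
        then have "x < tail_inv ?Q (h (real N) / real N)" using True unfolding a_def by simp
        then show "h (real N) / real N \<le> ?Q x"
          using tail_inv_lower[OF meas[of 0] y _ pos] True by simp
      qed
      then show ?thesis by simp
    next
      case False
      have "q \<ge> 1" unfolding q_def
      proof (rule tail_left[OF meas[of 0]])
        fix x assume "x < a N"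
        then have "x \<le> 0" using False unfolding a_def by simp
        then show "1 \<le> ?Q x" using tail_mono[OF meas[of 0], of x 0] Q0 by simp
      qed
      then show ?thesis by simp
    qed
    have q01: "0 \<le> q" "q \<le> 1" unfolding q_def by auto
    have "real N * min (h (real N) / real N) 1 = m N"
      unfolding m_def using Npos by (simp add: min_mult_distrib_left)
    then have mq: "real N * q \<ge> m N"
      using mult_left_mono[OF qmin, of "real N"] Npos by simp
    define L where "L = {\<omega>\<in>space M. card {i\<in>{..<N}. a N \<le> U i \<omega>} \<le> 1}"
    define R where "R = (\<Union>i\<in>{..<N}. {\<omega>\<in>space M. b N < U i \<omega>})"
    have N1: "N \<ge> 1" using N2 by simp
    have Lsets: "L \<in> sets M" unfolding L_def by (rule count_le1(1)[OF indep ident N1])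
    have probL: "prob L \<le> 2 * exp 1 * exp (- m N / 2)"
      using count_le1(2)[OF indep ident N1, of "a N"] analytic_bound[OF q01 N1 mq]
      unfolding L_def q_def by linarith
    have Rsets: "R \<in> sets M" unfolding R_def using meas by auto
    have ypos: "1 / (real N * h (real N)) > 0" using Npos hpos by simp
    have probRi: "prob {\<omega>\<in>space M. b N < U i \<omega>} \<le> 1 / (real N * h (real N))" for i
    proof -
      have "prob {\<omega>\<in>space M. b N < U i \<omega>} = prob (U i -` {b N<..} \<inter> space M)"
        by (rule arg_cong[where f=prob]) auto
      also have "\<dots> = prob (U 0 -` {b N<..} \<inter> space M)" by (rule pr) simp
      also have "\<dots> = ?Q (b N)" unfolding tail_def by (rule arg_cong[where f=prob]) auto
      also have "\<dots> \<le> 1 / (real N * h (real N))" unfolding b_def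
        by (rule tail_inv_upper[OF meas[of 0] ypos])
      finally show ?thesis .
    qed
    have "prob R \<le> (\<Sum>i\<in>{..<N}. prob {\<omega>\<in>space M. b N < U i \<omega>})"
      unfolding R_def using meas by (intro finite_measure_subadditive_finite) auto
    also have "\<dots> \<le> (\<Sum>i\<in>{..<N}. 1 / (real N * h (real N)))"
      by (intro sum_mono probRi)
    also have "\<dots> = 1 / h (real N)" using Npos by simp
    finally have probR: "prob R \<le> 1 / h (real N)" .
    have Geq: "G N = space M - (L \<union> R)"
    proof (intro set_eqI)
      fix \<omega>
      let ?C = "{i\<in>{..<N}. a N \<le> U i \<omega>}"
      have e1: "a N \<le> order_stat U N (N - 1) \<omega> \<longleftrightarrow> \<not> card ?C \<le> 1"
        using order_stat_2nd[OF N2, of "a N" U \<omega>] by linarith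
      have e2: "order_stat U N N \<omega> \<le> b N \<longleftrightarrow> \<not> (\<exists>i<N. b N < U i \<omega>)"
      proof -
        have "(\<forall>i<N. U i \<omega> \<le> b N) \<longleftrightarrow> \<not> (\<exists>i<N. b N < U i \<omega>)" by (meson not_less)
        then show ?thesis using order_stat_max[OF N1, of U \<omega> "b N"] by simp
      qed
      have e3: "order_stat U N (N - 1) \<omega> \<le> order_stat U N N \<omega>"
        by (rule order_stat_mid[OF N2])
      have g: "\<omega> \<in> G N \<longleftrightarrow> \<omega> \<in> space M \<and> \<not> card ?C \<le> 1 \<and> \<not> (\<exists>i<N. b N < U i \<omega>)"
        unfolding G_def using e1 e2 e3 by blast
      have l: "\<omega> \<in> L \<longleftrightarrow> \<omega> \<in> space M \<and> card ?C \<le> 1" unfolding L_def by blast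
      have r: "\<omega> \<in> R \<longleftrightarrow> \<omega> \<in> space M \<and> (\<exists>i<N. b N < U i \<omega>)" unfolding R_def by blast
      show "\<omega> \<in> G N \<longleftrightarrow> \<omega> \<in> space M - (L \<union> R)"
        using g l r by blast
    qed
    have "prob (G N) = 1 - prob (L \<union> R)" unfolding Geq
      using Lsets Rsets by (intro prob_compl) auto
    moreover have "prob (L \<union> R) \<le> prob L + prob R"
      using Lsets Rsets by (intro measure_Un_le) auto
    ultimately show ?thesis using probL probR by linarith
  qed
  have ev1: "\<forall>\<^sub>F N in sequentially. 1 - 2 * exp 1 * exp (- m N / 2) - 1 / h (real N) \<le> prob (G N)"
    using eventually_conj[OF eventually_ge_at_top[of 2] ev_h[of 0]]
    by eventually_elim (erule conjE, rule lowbound)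
  have ev2: "\<forall>\<^sub>F N in sequentially. prob (G N) \<le> 1" by simp
  have mlim: "filterlim m at_top sequentially"
    unfolding filterlim_at_top m_def
  proof
    fix Z :: real
    have "\<forall>\<^sub>F N in sequentially. Z \<le> h (real N)" using hN[unfolded filterlim_at_top] by (rule spec)
    moreover have "\<forall>\<^sub>F N in sequentially. Z \<le> real N"
      using filterlim_real_sequentially[unfolded filterlim_at_top] by (rule spec)
    ultimately show "\<forall>\<^sub>F N in sequentially. Z \<le> min (h (real N)) (real N)"
      by eventually_elim simp
  qed
  have mbot: "filterlim (\<lambda>N. - m N / 2) at_bot sequentially"
    unfolding filterlim_at_bot
  proof
    fix Z :: real
    have "\<forall>\<^sub>F N in sequentially. - 2 * Z \<le> m N" using mlim[unfolded filterlim_at_top] by (rule spec)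
    then show "\<forall>\<^sub>F N in sequentially. - m N / 2 \<le> Z" by eventually_elim simp
  qed
  have l1: "(\<lambda>N. exp (- m N / 2)) \<longlonglongrightarrow> 0"
    using filterlim_compose[OF exp_at_bot mbot] by (simp only: o_def)
  have l2: "(\<lambda>N. inverse (h (real N))) \<longlonglongrightarrow> 0"
    by (rule tendsto_inverse_0_at_top[OF hN])
  have t1: "(\<lambda>N. 2 * exp 1 * exp (- m N / 2)) \<longlonglongrightarrow> 0"
    using tendsto_mult[OF tendsto_const l1, of "2 * exp 1"] by simp
  have t2: "(\<lambda>N. 2 * exp 1 * exp (- m N / 2) + inverse (h (real N))) \<longlonglongrightarrow> 0"
    by (rule tendsto_add_zero[OF t1 l2])
  have lowlim: "(\<lambda>N. 1 - 2 * exp 1 * exp (- m N / 2) - 1 / h (real N)) \<longlonglongrightarrow> 1"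
    using tendsto_diff[OF tendsto_const t2, of 1] by (simp add: algebra_simps inverse_eq_divide)
  have "(\<lambda>N. prob (G N)) \<longlonglongrightarrow> 1"
    by (rule tendsto_sandwich[OF ev1 ev2 lowlim tendsto_const])
  then show ?thesis unfolding G_def a_def b_def .
qed

end
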